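(* Let $G$ be a dense $K_4^3\cup e$-free $3$-graph with $\lambda(G)>\frac{\sqrt3}{18}$. Then $G$ does not contain $K_5^3$ as a subgraph.
   Context: $K_4^3\cup e$ is the $3$-graph on $\{1,\dots,7\}$ with edges $\{123,124,134,234,567\}$. $K_5^3$ is the complete $3$-graph on $5$ vertices. For a $3$-graph $G$ on $[n]$, $\lambda(G)=\max\{\sum_{e\in E(G)}\prod_{i\in e}x_i:\sum_ix_i=1,x_i\ge0\}$. An $r$-graph $G$ is dense if $\lambda(G')<\lambda(G)$ for every proper subgraph $G'$ of $G$. *)

theory Defs
  imports Complex_Main
begin

definition three_graph :: "'a set \<Rightarrow> 'a set set \<Rightarrow> bool" where
  "three_graph V E \<longleftrightarrow> finite V \<and> (\<forall>e\<in>E. e \<subseteq> V \<and> card e = 3)"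

definition lagrangian :: "'a set \<Rightarrow> 'a set set \<Rightarrow> real" where
  "lagrangian V E =
     (if V = {} then 0 else
      Sup {(\<Sum>e\<in>E. \<Prod>i\<in>e. x i) | x. (\<forall>i\<in>V. x i \<ge> 0) \<and> (\<Sum>i\<in>V. x i) = 1})"

definition subgraph :: "'a set \<Rightarrow> 'a set set \<Rightarrow> 'a set \<Rightarrow> 'a set set \<Rightarrow> bool" where
  "subgraph V' E' V E \<longleftrightarrow> V' \<subseteq> V \<and> E' \<subseteq> E \<and> (\<forall>e\<in>E'. e \<subseteq> V')"

definition dense :: "'a set \<Rightarrow> 'a set set \<Rightarrow> bool" where
  "dense V E \<longleftrightarrow> (\<forall>V' E'. subgraph V' E' V E \<and> (V', E') \<noteq> (V, E)
                      \<longrightarrow> lagrangian V' E' < lagrangian V E)"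

definition contains_copy :: "'b set \<Rightarrow> 'b set set \<Rightarrow> 'a set \<Rightarrow> 'a set set \<Rightarrow> bool" where
  "contains_copy VF EF V E \<longleftrightarrow>
     (\<exists>f. inj_on f VF \<and> f ` VF \<subseteq> V \<and> (\<forall>e\<in>EF. f ` e \<in> E))"

definition K43e_V :: "nat set" where "K43e_V = {1..7}"
definition K43e_E :: "nat set set" where
  "K43e_E = {{1,2,3},{1,2,4},{1,3,4},{2,3,4},{5,6,7}}"

definition K53_V :: "nat set" where "K53_V = {1..5}"
definition K53_E :: "nat set set" where
  "K53_E = {e. e \<subseteq> {1..5} \<and> card e = 3}"

end

theory Submission
  imports Defs
begin
lemma four_elems:
  assumes "finite A" "card A \<ge> 4"
  shows "\<exists>b1 b2 b3 b4. b1\<in>A \<and> b2\<in>A \<and> b3\<in>A \<and> b4\<in>A \<and> distinct [b1,b2,b3,b4]"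
proof -
  obtain B where B: "B \<subseteq> A" "card B = 4" using obtain_subset_with_card_n assms by metis
  then have "card B = Suc (Suc (Suc (Suc 0)))" by simp
  then obtain b1 b2 b3 b4 where "B = {b1,b2,b3,b4}" "distinct [b1,b2,b3,b4]"
    by (auto simp: card_Suc_eq)
  then show ?thesis using B by auto
qed

lemma meet_lemma:
  fixes V :: "'a set" and E :: "'a set set" and f :: "nat \<Rightarrow> 'a"
  assumes tg: "three_graph V E"
    and nc: "\<not> contains_copy K43e_V K43e_E V E"
    and finj: "inj_on f {1..5}" and fV: "f ` {1..5} \<subseteq> V"
    and tri: "\<And>u v w. u\<in>f ` {1..5} \<Longrightarrow> v\<in>f ` {1..5} \<Longrightarrow> w\<in>f ` {1..5} \<Longrightarrow> u\<noteq>v \<Longrightarrow> v\<noteq>w \<Longrightarrow> u\<noteq>w \<Longrightarrow> {u,v,w} \<in> E"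
    and e: "e \<in> E"
  shows "2 \<le> card (e \<inter> f ` {1..5})"
proof (rule ccontr)
  define S where "S = f ` {1..5::nat}"
  assume "\<not> 2 \<le> card (e \<inter> f ` {1..5})"
  then have c1: "card (e \<inter> S) \<le> 1" unfolding S_def by simp
  have cS: "card S = 5" unfolding S_def using finj by (simp add: card_image)
  have fS: "finite S" unfolding S_def by simp
  have "card (S - e) = card S - card (S \<inter> e)" using fS by (simp add: card_Diff_subset_Int)
  moreover have "S \<inter> e = e \<inter> S" by blast
  ultimately have "card (S - e) \<ge> 4" using c1 cS by simp
  then obtain b1 b2 b3 b4 where b: "b1\<in>S-e" "b2\<in>S-e" "b3\<in>S-e" "b4\<in>S-e" "distinct [b1,b2,b3,b4]"
    using four_elems[of "S - e"] fS by auto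
  have "card e = 3" "e \<subseteq> V" using tg e unfolding three_graph_def by auto
  then obtain p q r where pqr: "e = {p,q,r}" "p\<noteq>q" "q\<noteq>r" "p\<noteq>r" by (auto simp: card_3_iff)
  define g where "g = (\<lambda>n::nat. if n=1 then b1 else if n=2 then b2 else if n=3 then b3 else if n=4 then b4
      else if n=5 then p else if n=6 then q else r)"
  have V7: "K43e_V = {1,2,3,4,5,6,7}" unfolding K43e_V_def by auto
  have SV: "S \<subseteq> V" using fV S_def by simp
  have "contains_copy K43e_V K43e_E V E"
    unfolding contains_copy_def
  proof (intro exI conjI)
    show "inj_on g K43e_V" unfolding V7 inj_on_def g_def using b pqr by auto
    show "g ` K43e_V \<subseteq> V" unfolding V7 g_def using b pqr SV \<open>e \<subseteq> V\<close> by auto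
    show "\<forall>ea\<in>K43e_E. g ` ea \<in> E"
    proof -
      have "{r,q,p} \<in> E" using e pqr by (simp add: insert_commute)
      then show ?thesis unfolding K43e_E_def g_def using b e pqr tri[folded S_def] by auto
    qed
  qed
  then show False using nc by simp
qed

lemma e3_bound:
  fixes x1 x2 x3 x4 x5 x6 :: real
  assumes "x1\<ge>0" "x2\<ge>0" "x3\<ge>0" "x4\<ge>0" "x5\<ge>0" "x6\<ge>0"
  shows "216*(x1*x2*x3+x1*x2*x4+x1*x2*x5+x1*x2*x6+x1*x3*x4+x1*x3*x5+x1*x3*x6+x1*x4*x5+x1*x4*x6+x1*x5*x6+x2*x3*x4+x2*x3*x5+x2*x3*x6+x2*x4*x5+x2*x4*x6+x2*x5*x6+x3*x4*x5+x3*x4*x6+x3*x5*x6+x4*x5*x6) \<le> 20*(x1+x2+x3+x4+x5+x6)^3"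
proof -
  have id: "20*(x1+x2+x3+x4+x5+x6)^3 - 216*(x1*x2*x3+x1*x2*x4+x1*x2*x5+x1*x2*x6+x1*x3*x4+x1*x3*x5+x1*x3*x6+x1*x4*x5+x1*x4*x6+x1*x5*x6+x2*x3*x4+x2*x3*x5+x2*x3*x6+x2*x4*x5+x2*x4*x6+x2*x5*x6+x3*x4*x5+x3*x4*x6+x3*x5*x6+x4*x5*x6) = 4*((x1+x2)*(x1-x2)^2 + (x1+x3)*(x1-x3)^2 + (x1+x4)*(x1-x4)^2 + (x1+x5)*(x1-x5)^2 + (x1+x6)*(x1-x6)^2 + (x2+x3)*(x2-x3)^2 + (x2+x4)*(x2-x4)^2 + (x2+x5)*(x2-x5)^2 + (x2+x6)*(x2-x6)^2 + (x3+x4)*(x3-x4)^2 + (x3+x5)*(x3-x5)^2 + (x3+x6)*(x3-x6)^2 + (x4+x5)*(x4-x5)^2 + (x4+x6)*(x4-x6)^2 + (x5+x6)*(x5-x6)^2) + 16*((x1*(x2-x3)^2+x2*(x1-x3)^2+x3*(x1-x2)^2) + (x1*(x2-x4)^2+x2*(x1-x4)^2+x4*(x1-x2)^2) + (x1*(x2-x5)^2+x2*(x1-x5)^2+x5*(x1-x2)^2) + (x1*(x2-x6)^2+x2*(x1-x6)^2+x6*(x1-x2)^2) + (x1*(x3-x4)^2+x3*(x1-x4)^2+x4*(x1-x3)^2) + (x1*(x3-x5)^2+x3*(x1-x5)^2+x5*(x1-x3)^2) + (x1*(x3-x6)^2+x3*(x1-x6)^2+x6*(x1-x3)^2) + (x1*(x4-x5)^2+x4*(x1-x5)^2+x5*(x1-x4)^2)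 + (x1*(x4-x6)^2+x4*(x1-x6)^2+x6*(x1-x4)^2) + (x1*(x5-x6)^2+x5*(x1-x6)^2+x6*(x1-x5)^2) + (x2*(x3-x4)^2+x3*(x2-x4)^2+x4*(x2-x3)^2) + (x2*(x3-x5)^2+x3*(x2-x5)^2+x5*(x2-x3)^2) + (x2*(x3-x6)^2+x3*(x2-x6)^2+x6*(x2-x3)^2) + (x2*(x4-x5)^2+x4*(x2-x5)^2+x5*(x2-x4)^2) + (x2*(x4-x6)^2+x4*(x2-x6)^2+x6*(x2-x4)^2) + (x2*(x5-x6)^2+x5*(x2-x6)^2+x6*(x2-x5)^2) + (x3*(x4-x5)^2+x4*(x3-x5)^2+x5*(x3-x4)^2) + (x3*(x4-x6)^2+x4*(x3-x6)^2+x6*(x3-x4)^2) + (x3*(x5-x6)^2+x5*(x3-x6)^2+x6*(x3-x5)^2) + (x4*(x5-x6)^2+x5*(x4-x6)^2+x6*(x4-x5)^2))"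
    by (simp add: algebra_simps power2_eq_square power3_eq_cube)
  have "0 \<le> 4*((x1+x2)*(x1-x2)^2 + (x1+x3)*(x1-x3)^2 + (x1+x4)*(x1-x4)^2 + (x1+x5)*(x1-x5)^2 + (x1+x6)*(x1-x6)^2 + (x2+x3)*(x2-x3)^2 + (x2+x4)*(x2-x4)^2 + (x2+x5)*(x2-x5)^2 + (x2+x6)*(x2-x6)^2 + (x3+x4)*(x3-x4)^2 + (x3+x5)*(x3-x5)^2 + (x3+x6)*(x3-x6)^2 + (x4+x5)*(x4-x5)^2 + (x4+x6)*(x4-x6)^2 + (x5+x6)*(x5-x6)^2) + 16*((x1*(x2-x3)^2+x2*(x1-x3)^2+x3*(x1-x2)^2) + (x1*(x2-x4)^2+x2*(x1-x4)^2+x4*(x1-x2)^2) + (x1*(x2-x5)^2+x2*(x1-x5)^2+x5*(x1-x2)^2) + (x1*(x2-x6)^2+x2*(x1-x6)^2+x6*(x1-x2)^2) + (x1*(x3-x4)^2+x3*(x1-x4)^2+x4*(x1-x3)^2) + (x1*(x3-x5)^2+x3*(x1-x5)^2+x5*(x1-x3)^2) + (x1*(x3-x6)^2+x3*(x1-x6)^2+x6*(x1-x3)^2) + (x1*(x4-x5)^2+x4*(x1-x5)^2+x5*(x1-x4)^2) + (x1*(x4-x6)^2+x4*(x1-x6)^2+x6*(x1-x4)^2) + (x1*(x5-x6)^2+x5*(x1-x6)^2+x6*(x1-x5)^2) + (x2*(x3-x4)^2+x3*(x2-x4)^2+x4*(x2-x3)^2) + (x2*(x3-x5)^2+x3*(x2-x5)^2+x5*(x2-x3)^2)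 + (x2*(x3-x6)^2+x3*(x2-x6)^2+x6*(x2-x3)^2) + (x2*(x4-x5)^2+x4*(x2-x5)^2+x5*(x2-x4)^2) + (x2*(x4-x6)^2+x4*(x2-x6)^2+x6*(x2-x4)^2) + (x2*(x5-x6)^2+x5*(x2-x6)^2+x6*(x2-x5)^2) + (x3*(x4-x5)^2+x4*(x3-x5)^2+x5*(x3-x4)^2) + (x3*(x4-x6)^2+x4*(x3-x6)^2+x6*(x3-x4)^2) + (x3*(x5-x6)^2+x5*(x3-x6)^2+x6*(x3-x5)^2) + (x4*(x5-x6)^2+x5*(x4-x6)^2+x6*(x4-x5)^2))"
    using assms by (intro add_nonneg_nonneg mult_nonneg_nonneg; simp)
  then show ?thesis using id by linarith
qed

lemma e3_bound2:
  fixes x1 x2 x3 x4 x5 x6 :: real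
  assumes "x1\<ge>0" "x2\<ge>0" "x3\<ge>0" "x4\<ge>0" "x5\<ge>0" "x6\<ge>0" "(x1+x2+x3+x4+x5+x6) = 1"
  shows "(x1*x2*x3+x1*x2*x4+x1*x2*x5+x1*x3*x4+x1*x3*x5+x1*x4*x5+x2*x3*x4+x2*x3*x5+x2*x4*x5+x3*x4*x5) + x6*(x1*x2+x1*x3+x1*x4+x1*x5+x2*x3+x2*x4+x2*x5+x3*x4+x3*x5+x4*x5) \<le> 5/54"
proof -
  have "216*(x1*x2*x3+x1*x2*x4+x1*x2*x5+x1*x2*x6+x1*x3*x4+x1*x3*x5+x1*x3*x6+x1*x4*x5+x1*x4*x6+x1*x5*x6+x2*x3*x4+x2*x3*x5+x2*x3*x6+x2*x4*x5+x2*x4*x6+x2*x5*x6+x3*x4*x5+x3*x4*x6+x3*x5*x6+x4*x5*x6) \<le> 20*(x1+x2+x3+x4+x5+x6)^3" using e3_bound assms by blast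
  moreover have "(x1*x2*x3+x1*x2*x4+x1*x2*x5+x1*x2*x6+x1*x3*x4+x1*x3*x5+x1*x3*x6+x1*x4*x5+x1*x4*x6+x1*x5*x6+x2*x3*x4+x2*x3*x5+x2*x3*x6+x2*x4*x5+x2*x4*x6+x2*x5*x6+x3*x4*x5+x3*x4*x6+x3*x5*x6+x4*x5*x6) = (x1*x2*x3+x1*x2*x4+x1*x2*x5+x1*x3*x4+x1*x3*x5+x1*x4*x5+x2*x3*x4+x2*x3*x5+x2*x4*x5+x3*x4*x5) + x6*(x1*x2+x1*x3+x1*x4+x1*x5+x2*x3+x2*x4+x2*x5+x3*x4+x3*x5+x4*x5)" by (simp add: algebra_simps)
  ultimately show ?thesis using assms(7) by simp
qed
lemma sort3:
  fixes i j k :: nat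
  assumes "i \<noteq> j" "j \<noteq> k" "i \<noteq> k"
  shows "\<exists>a b c. a < b \<and> b < c \<and> {i,j,k} = {a,b,c}"
proof -
  have "(i<j \<and> j<k) \<or> (i<k \<and> k<j) \<or> (j<i \<and> i<k) \<or> (j<k \<and> k<i) \<or> (k<i \<and> i<j) \<or> (k<j \<and> j<i)"
    using assms by arith
  then show ?thesis
  proof (elim disjE)
    assume "i<j \<and> j<k" then show ?thesis by blast
  next
    assume "i<k \<and> k<j" then show ?thesis by (metis insert_commute)
  next
    assume "j<i \<and> i<k" then show ?thesis by (metis insert_commute)
  next
    assume "j<k \<and> k<i" then show ?thesis by (metis insert_commute)
  next
    assume "k<i \<and> i<j" then show ?thesis by (metis insert_commute)
  next
    assume "k<j \<and> j<i" then show ?thesis by (metis insert_commute)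
  qed
qed

lemma T3_mem:
  fixes a b c :: nat
  assumes "1 \<le> a" "a < b" "b < c" "c \<le> 5"
  shows "(a,b,c) \<in> {(1,2,3),(1,2,4),(1,2,5),(1,3,4),(1,3,5),(1,4,5),(2,3,4),(2,3,5),(2,4,5),(3,4,5)}"
proof -
  have "a=1 \<or> a=2 \<or> a=3" "b=2 \<or> b=3 \<or> b=4" "c=3 \<or> c=4 \<or> c=5" using assms by arith+
  then show ?thesis using assms by (elim disjE) simp_all
qed

lemma T2_mem:
  fixes a b :: nat
  assumes "1 \<le> a" "a < b" "b \<le> 5"
  shows "(a,b) \<in> {(1,2),(1,3),(1,4),(1,5),(2,3),(2,4),(2,5),(3,4),(3,5),(4,5)}"
proof -
  have "a=1 \<or> a=2 \<or> a=3 \<or> a=4" "b=2 \<or> b=3 \<or> b=4 \<or> b=5" using assms by arith+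
  then show ?thesis using assms by (elim disjE) simp_all
qed


lemma sum_bound:
  fixes V :: "'a set" and E :: "'a set set" and f :: "nat \<Rightarrow> 'a" and x :: "'a \<Rightarrow> real"
  assumes tg: "three_graph V E" and finj: "inj_on f {1..5}" and fV: "f ` {1..5} \<subseteq> V"
    and meet: "\<forall>e\<in>E. 2 \<le> card (e \<inter> f ` {1..5})"
    and xnn: "\<forall>i\<in>V. 0 \<le> x i" and xs: "(\<Sum>i\<in>V. x i) = 1"
  shows "(\<Sum>e\<in>E. \<Prod>i\<in>e. x i) \<le> 5/54"
proof -
  define S where "S = f ` {1..5::nat}"
  define T3 :: "(nat\<times>nat\<times>nat) set" where
    "T3 = {(1,2,3),(1,2,4),(1,2,5),(1,3,4),(1,3,5),(1,4,5),(2,3,4),(2,3,5),(2,4,5),(3,4,5)}"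
  define T2 :: "(nat\<times>nat) set" where
    "T2 = {(1,2),(1,3),(1,4),(1,5),(2,3),(2,4),(2,5),(3,4),(3,5),(4,5)}"
  define \<phi>3 where "\<phi>3 = (\<lambda>(i::nat,j::nat,k::nat). {f i, f j, f k})"
  define \<phi>2 where "\<phi>2 = (\<lambda>(v::'a,i::nat,j::nat). {v, f i, f j})"
  define w where "w = (\<lambda>e. \<Prod>i\<in>e. x i)"
  have finV: "finite V" using tg unfolding three_graph_def by simp
  have EV: "\<And>e. e\<in>E \<Longrightarrow> e \<subseteq> V \<and> card e = 3" using tg unfolding three_graph_def by simp
  have finE: "finite E" using finV EV by (meson Pow_iff finite_Pow_iff finite_subset subsetI)
  have wnn: "\<And>e. e \<subseteq> V \<Longrightarrow> 0 \<le> w e" unfolding w_def using xnn by (meson prod_nonneg subsetD)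
  have SV: "S \<subseteq> V" using fV S_def by simp
  have S5: "S = {f 1, f 2, f 3, f 4, f 5}" 
  proof -
    have "{1..5::nat} = {1,2,3,4,5}" by auto
    then show ?thesis unfolding S_def by simp
  qed
  have dist: "distinct [f 1, f 2, f 3, f 4, f 5]" using finj by (simp add: inj_on_eq_iff[OF finj])
  have fVs: "f 1 \<in> V" "f 2 \<in> V" "f 3 \<in> V" "f 4 \<in> V" "f 5 \<in> V" using SV S5 by auto
  define E1 where "E1 = {e\<in>E. e \<subseteq> S}"
  define E2 where "E2 = {e\<in>E. \<not> e \<subseteq> S}"
  have split: "(\<Sum>e\<in>E. w e) = (\<Sum>e\<in>E1. w e) + (\<Sum>e\<in>E2. w e)"
  proof -
    have "E = E1 \<union> E2" "E1 \<inter> E2 = {}" unfolding E1_def E2_def by auto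
    moreover have "finite E1" "finite E2" using finE unfolding E1_def E2_def by auto
    ultimately show ?thesis by (metis sum.union_disjoint)
  qed
  have E1sub: "E1 \<subseteq> \<phi>3 ` T3"
  proof
    fix e assume e: "e \<in> E1"
    then have eS: "e \<subseteq> S" and ce: "card e = 3" using EV unfolding E1_def by auto
    then obtain p q r where pqr: "e = {p,q,r}" "p\<noteq>q" "q\<noteq>r" "p\<noteq>r" by (auto simp: card_3_iff)
    then have "p \<in> S" "q \<in> S" "r \<in> S" using eS by auto
    then obtain i j k where ijk: "i\<in>{1..5}" "j\<in>{1..5}" "k\<in>{1..5}" "p = f i" "q = f j" "r = f k"
      unfolding S_def by blast
    then have "i\<noteq>j" "j\<noteq>k" "i\<noteq>k" using pqr by auto
    then obtain a b c where abc: "a<b" "b<c" "{i,j,k} = {a,b,c}" using sort3[OF \<open>i\<noteq>j\<close> \<open>j\<noteq>k\<close> \<open>i\<noteq>k\<close>] by blast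
    have "a \<in> {i,j,k}" "c \<in> {i,j,k}" using abc(3) by blast+
    then have "a \<in> {1..5}" "c \<in> {1..5}" using ijk(1-3) by blast+
    then have "(a,b,c) \<in> T3" unfolding T3_def using T3_mem abc by auto
    moreover have "e = \<phi>3 (a,b,c)"
    proof -
      have "e = f ` {i,j,k}" using pqr ijk by simp
      also have "\<dots> = f ` {a,b,c}" using abc by simp
      finally show ?thesis unfolding \<phi>3_def by simp
    qed
    ultimately show "e \<in> \<phi>3 ` T3" by blast
  qed
  have finT3: "finite T3" unfolding T3_def by simp
  have finT2: "finite T2" unfolding T2_def by simp
  have phi3V: "\<And>t. t \<in> T3 \<Longrightarrow> \<phi>3 t \<subseteq> V" unfolding \<phi>3_def T3_def using fVs by auto
  have "(\<Sum>e\<in>E1. w e) \<le> (\<Sum>e\<in>\<phi>3 ` T3. w e)"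
    using E1sub finT3 wnn phi3V by (intro sum_mono2) auto
  also have "\<dots> \<le> (\<Sum>t\<in>T3. (w \<circ> \<phi>3) t)"
    using finT3 wnn phi3V by (intro sum_image_le) auto
  also have "\<dots> = x (f 1) * x (f 2) * x (f 3) + x (f 1) * x (f 2) * x (f 4) + x (f 1) * x (f 2) * x (f 5)
     + x (f 1) * x (f 3) * x (f 4) + x (f 1) * x (f 3) * x (f 5) + x (f 1) * x (f 4) * x (f 5)
     + x (f 2) * x (f 3) * x (f 4) + x (f 2) * x (f 3) * x (f 5) + x (f 2) * x (f 4) * x (f 5)
     + x (f 3) * x (f 4) * x (f 5)"
    unfolding T3_def \<phi>3_def w_def using dist by (simp add: algebra_simps)
  finally have B1: "(\<Sum>e\<in>E1. w e) \<le> x (f 1) * x (f 2) * x (f 3) + x (f 1) * x (f 2) * x (f 4) + x (f 1) * x (f 2) * x (f 5)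
     + x (f 1) * x (f 3) * x (f 4) + x (f 1) * x (f 3) * x (f 5) + x (f 1) * x (f 4) * x (f 5)
     + x (f 2) * x (f 3) * x (f 4) + x (f 2) * x (f 3) * x (f 5) + x (f 2) * x (f 4) * x (f 5)
     + x (f 3) * x (f 4) * x (f 5)" .
  have E2sub: "E2 \<subseteq> \<phi>2 ` ((V - S) \<times> T2)"
  proof
    fix e assume e: "e \<in> E2"
    then have eV: "e \<subseteq> V" and ce: "card e = 3" and nS: "\<not> e \<subseteq> S" and c2: "2 \<le> card (e \<inter> S)"
      using EV meet unfolding E2_def S_def by auto
    have fe: "finite e" using ce card.infinite by fastforce
    have "card (e \<inter> S) \<le> 3" using ce fe card_mono[of e "e \<inter> S"] by auto
    moreover have "card (e \<inter> S) \<noteq> 3"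
    proof
      assume "card (e \<inter> S) = 3"
      then have "e \<inter> S = e" using card_subset_eq[OF fe, of "e \<inter> S"] ce by auto
      then show False using nS by blast
    qed
    ultimately have c2': "card (e \<inter> S) = 2" using c2 by linarith
    then obtain u v where uv: "e \<inter> S = {u,v}" "u \<noteq> v" by (auto simp: card_2_iff)
    have "card (e - S) = card e - card (e \<inter> S)" using fe by (simp add: card_Diff_subset_Int)
    then have "card (e - S) = 1" using ce c2' by simp
    then obtain y where y: "e - S = {y}" by (auto simp: card_1_singleton_iff)
    have eeq: "e = {y, u, v}" using y uv by blast
    have yVS: "y \<in> V - S" using y eV by blast
    have "u \<in> S" "v \<in> S" using uv by blast+
    then obtain i j where ij: "i\<in>{1..5}" "j\<in>{1..5}" "u = f i" "v = f j" unfolding S_def by blast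
    then have "i \<noteq> j" using uv by auto
    then obtain a b where ab: "a < b" "{i,j} = {a,b}"
      by (metis insert_commute linorder_neqE_nat)
    have "a \<in> {i,j}" "b \<in> {i,j}" using ab(2) by blast+
    then have "a \<in> {1..5}" "b \<in> {1..5}" using ij(1-2) by blast+
    then have "(a,b) \<in> T2" unfolding T2_def using T2_mem ab by auto
    moreover have "e = \<phi>2 (y,a,b)"
    proof -
      have "e = insert y (f ` {i,j})" using eeq ij by simp
      also have "\<dots> = insert y (f ` {a,b})" using ab by simp
      finally show ?thesis unfolding \<phi>2_def by simp
    qed
    ultimately show "e \<in> \<phi>2 ` ((V - S) \<times> T2)" using yVS by blast
  qed
  have phi2V: "\<And>t. t \<in> (V - S) \<times> T2 \<Longrightarrow> \<phi>2 t \<subseteq> V" unfolding \<phi>2_def T2_def using fVs by auto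
  have finVT: "finite ((V - S) \<times> T2)" using finV finT2 by simp
  define e2 where "e2 = x (f 1) * x (f 2) + x (f 1) * x (f 3) + x (f 1) * x (f 4) + x (f 1) * x (f 5)
     + x (f 2) * x (f 3) + x (f 2) * x (f 4) + x (f 2) * x (f 5) + x (f 3) * x (f 4) + x (f 3) * x (f 5)
     + x (f 4) * x (f 5)"
  have "(\<Sum>e\<in>E2. w e) \<le> (\<Sum>e\<in>\<phi>2 ` ((V - S) \<times> T2). w e)"
    using E2sub finVT wnn phi2V by (intro sum_mono2) auto
  also have "\<dots> \<le> (\<Sum>t\<in>(V - S) \<times> T2. (w \<circ> \<phi>2) t)"
    using finVT wnn phi2V by (intro sum_image_le) auto
  also have "\<dots> = (\<Sum>y\<in>V - S. \<Sum>t\<in>T2. (w \<circ> \<phi>2) (y,t))"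
    by (simp add: sum.cartesian_product)
  also have "\<dots> = (\<Sum>y\<in>V - S. x y * e2)"
  proof (rule sum.cong)
    fix y assume "y \<in> V - S"
    then have "y \<noteq> f 1" "y \<noteq> f 2" "y \<noteq> f 3" "y \<noteq> f 4" "y \<noteq> f 5" using S5 by auto
    then show "(\<Sum>t\<in>T2. (w \<circ> \<phi>2) (y,t)) = x y * e2"
      unfolding T2_def \<phi>2_def w_def e2_def using dist by (simp add: algebra_simps)
  qed simp
  also have "\<dots> = (\<Sum>y\<in>V - S. x y) * e2" by (simp add: sum_distrib_right)
  finally have B2: "(\<Sum>e\<in>E2. w e) \<le> (\<Sum>y\<in>V - S. x y) * e2" .
  have "(\<Sum>i\<in>V. x i) = (\<Sum>i\<in>V - S. x i) + (\<Sum>i\<in>S. x i)"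
    using finV SV by (simp add: sum.subset_diff)
  also have "(\<Sum>i\<in>S. x i) = x (f 1) + x (f 2) + x (f 3) + x (f 4) + x (f 5)"
    unfolding S5 using dist by simp
  finally have tot: "x (f 1) + x (f 2) + x (f 3) + x (f 4) + x (f 5) + (\<Sum>i\<in>V - S. x i) = 1"
    using xs by simp
  have Ynn: "0 \<le> (\<Sum>i\<in>V - S. x i)" using xnn by (intro sum_nonneg) auto
  have fin: "x (f 1) * x (f 2) * x (f 3) + x (f 1) * x (f 2) * x (f 4) + x (f 1) * x (f 2) * x (f 5)
     + x (f 1) * x (f 3) * x (f 4) + x (f 1) * x (f 3) * x (f 5) + x (f 1) * x (f 4) * x (f 5)
     + x (f 2) * x (f 3) * x (f 4) + x (f 2) * x (f 3) * x (f 5) + x (f 2) * x (f 4) * x (f 5)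
     + x (f 3) * x (f 4) * x (f 5) + (\<Sum>i\<in>V - S. x i) * e2 \<le> 5/54"
    unfolding e2_def using e3_bound2[OF _ _ _ _ _ Ynn tot] xnn fVs by simp
  have "(\<Sum>e\<in>E. \<Prod>i\<in>e. x i) = (\<Sum>e\<in>E. w e)" unfolding w_def by simp
  then show ?thesis using split B1 B2 fin by linarith
qed

theorem claim5p2:
  fixes V :: "'a set" and E :: "'a set set"
  assumes "three_graph V E"
    and "dense V E"
    and "\<not> contains_copy K43e_V K43e_E V E"
    and "lagrangian V E > sqrt 3 / 18"
  shows "\<not> contains_copy K53_V K53_E V E"
proof
  assume "contains_copy K53_V K53_E V E"
  then obtain f :: "nat \<Rightarrow> 'a" where finj: "inj_on f {1..5}" and fV: "f ` {1..5} \<subseteq> V"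
    and fE: "\<forall>e\<in>K53_E. f ` e \<in> E"
    unfolding contains_copy_def K53_V_def by blast
  have tri: "{u,v,w} \<in> E" if a: "u\<in>f ` {1..5}" "v\<in>f ` {1..5}" "w\<in>f ` {1..5}" "u\<noteq>v" "v\<noteq>w" "u\<noteq>w"
    for u v w
  proof -
    obtain i j k where ijk: "i\<in>{1..5}" "j\<in>{1..5}" "k\<in>{1..5}" "u = f i" "v = f j" "w = f k"
      using a(1-3) by blast
    then have "i\<noteq>j" "j\<noteq>k" "i\<noteq>k" using a(4-6) by auto
    then have "card {i,j,k} = 3" by simp
    then have "{i,j,k} \<in> K53_E" unfolding K53_E_def using ijk(1-3) by auto
    then have "f ` {i,j,k} \<in> E" using fE by blast
    then show ?thesis using ijk by simp
  qed
  have meet: "\<forall>e\<in>E. 2 \<le> card (e \<inter> f ` {1..5})"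
    using meet_lemma[OF assms(1) assms(3) finj fV tri] by blast
  have f1: "f 1 \<in> V" using fV by auto
  then have Vne: "V \<noteq> {}" by blast
  have finV: "finite V" using assms(1) unfolding three_graph_def by simp
  define L :: "real set" where "L = {(\<Sum>e\<in>E. \<Prod>i\<in>e. x i) | x :: 'a \<Rightarrow> real. (\<forall>i\<in>V. x i \<ge> 0) \<and> (\<Sum>i\<in>V. x i) = 1}"
  have lag: "lagrangian V E = Sup L" unfolding lagrangian_def L_def using Vne by simp
  define x0 where "x0 = (\<lambda>i. if i = f 1 then (1::real) else 0)"
  have "(\<Sum>i\<in>V. x0 i) = 1" unfolding x0_def using finV f1 by simp
  then have "(\<Sum>e\<in>E. \<Prod>i\<in>e. x0 i) \<in> L" unfolding L_def x0_def by auto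
  then have Lne: "L \<noteq> {}" by blast
  have "Sup L \<le> 5/54"
  proof (rule cSup_least[OF Lne])
    fix y assume "y \<in> L"
    then obtain x where "y = (\<Sum>e\<in>E. \<Prod>i\<in>e. x i)" "\<forall>i\<in>V. x i \<ge> 0" "(\<Sum>i\<in>V. x i) = 1"
      unfolding L_def by blast
    then show "y \<le> 5/54" using sum_bound[OF assms(1) finj fV meet] by simp
  qed
  moreover have "5/54 < sqrt 3 / 18"
  proof -
    have "5/3 < sqrt 3" by (rule real_less_rsqrt) (simp add: power2_eq_square)
    then show ?thesis by simp
  qed
  ultimately show False using assms(4) lag by simp
qed

end
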